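(* Let $U=(\mathcal{L}_1\otimes\mathcal{L}_2)\,\Omega\,(\mathcal{R}_1\otimes\mathcal{R}_2)$ be a two-qubit unitary, where $\mathcal{L}_i,\mathcal{R}_i$ are single-qubit unitaries and $$\Omega = e^{-i(\alpha_1\hat\sigma_1\otimes\hat\sigma_1+\alpha_2\hat\sigma_2\otimes\hat\sigma_2+\alpha_3\hat\sigma_3\otimes\hat\sigma_3)}$$ with $\hat\sigma_i$ the Pauli matrices. Let $c_i=\cos(4\alpha_i)$ and suppose $$\frac{3-c_1(c_2+c_3)-c_2c_3}{4}=0.$$ Then for every two-qubit density operator $\rho^{SE}$, with $\rho^S=\operatorname{Tr}_E\rho^{SE}$, there exists a single-qubit density operator $\zeta^E$ such that $\operatorname{Tr}_E(U\rho^{SE}U^\dagger)=\operatorname{Tr}_E(U(\rho^S\otimes\zeta^E)U^\dagger)$, i.e. the system dynamics can be $U$-generated by a product state.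
   Context: The quantity $\frac{3-c_1(c_2+c_3)-c_2c_3}{4}$ is the normalized entangling power of $U$. "$U$-generated by a product state" means existence of a valid environment state $\zeta^E$ with the displayed equality. *)

theory Defs
  imports "HOL-Analysis.Analysis"
begin

(* Matrices are complex^'n^'m (rows indexed by 'm). A qubit has index type 2
   (basis states 0, 1); a two-qubit system S (x) E has index type 2 \<times> 2,
   first component = system S, second = environment E. *)

definition madj :: "complex^'n^'m \<Rightarrow> complex^'m^'n" where
  "madj A = (\<chi> i j. cnj (A $ j $ i))"

definition munitary :: "complex^'n^'n \<Rightarrow> bool" where
  "munitary U \<longleftrightarrow> U ** madj U = mat 1 \<and> madj U ** U = mat 1"

definition mtrace :: "complex^'n^'n \<Rightarrow> complex" where
  "mtrace M = (\<Sum>i\<in>UNIV. M $ i $ i)"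

definition mpsd :: "complex^'n^'n \<Rightarrow> bool" where
  "mpsd M \<longleftrightarrow> madj M = M \<and>
     (\<forall>v::complex^'n. 0 \<le> Re (\<Sum>i\<in>UNIV. \<Sum>j\<in>UNIV. cnj (v $ i) * M $ i $ j * v $ j))"

definition density :: "complex^'n^'n \<Rightarrow> bool" where
  "density M \<longleftrightarrow> mpsd M \<and> mtrace M = 1"

definition tensor :: "complex^'a::finite^'a \<Rightarrow> complex^'b::finite^'b \<Rightarrow> complex^('a\<times>'b)^('a\<times>'b)"
  (infixl \<open>\<otimes>\<^sub>m\<close> 75) where
  "A \<otimes>\<^sub>m B = (\<chi> p q. A $ fst p $ fst q * B $ snd p $ snd q)"

definition ptrace_E :: "complex^('a::finite\<times>'b::finite)^('a\<times>'b) \<Rightarrow> complex^'a^'a" where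
  "ptrace_E M = (\<chi> i k. \<Sum>j\<in>UNIV. M $ (i, j) $ (k, j))"

definition msmult :: "complex \<Rightarrow> complex^'n^'m \<Rightarrow> complex^'n^'m" where
  "msmult c A = (\<chi> i j. c * A $ i $ j)"

primrec mpow :: "complex^'n^'n \<Rightarrow> nat \<Rightarrow> complex^'n^'n" where
  "mpow A 0 = mat 1"
| "mpow A (Suc n) = A ** mpow A n"

definition mexp :: "complex^'n^'n \<Rightarrow> complex^'n^'n" where
  "mexp A = (\<chi> i j. \<Sum>n. mpow A n $ i $ j / fact n)"

definition pauli1 :: "complex^2^2" where
  "pauli1 = (\<chi> i j. if i = j then 0 else 1)"

definition pauli2 :: "complex^2^2" where
  "pauli2 = (\<chi> i j. if i = j then 0 else if i = 0 then - \<i> else \<i>)"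

definition pauli3 :: "complex^2^2" where
  "pauli3 = (\<chi> i j. if i \<noteq> j then 0 else if i = 0 then 1 else -1)"

definition Omega :: "real \<Rightarrow> real \<Rightarrow> real \<Rightarrow> complex^(2\<times>2)^(2\<times>2)" where
  "Omega a1 a2 a3 = mexp (msmult (- \<i>)
     (msmult (of_real a1) (pauli1 \<otimes>\<^sub>m pauli1) + msmult (of_real a2) (pauli2 \<otimes>\<^sub>m pauli2)
      + msmult (of_real a3) (pauli3 \<otimes>\<^sub>m pauli3)))"

end

theory Submission
  imports Defs
begin

lemma two_eq0: "(2::2) = 0" by simp
lemma one_ne0[simp]: "(1::2) \<noteq> 0" "(0::2) \<noteq> 1" by simp_all
lemma two_cases: "(x::2) = 0 \<or> x = 1"
  using exhaust_2[of x] two_eq0 by metis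
lemma UNIV_2': "(UNIV::2 set) = {0,1}"
  using two_cases by blast
lemma sum2: "(\<Sum>i\<in>(UNIV::2 set). f i) = f 0 + f 1"
  by (simp add: UNIV_2')

lemma sum_pair: "(\<Sum>p\<in>UNIV. f p) = (\<Sum>i\<in>UNIV. \<Sum>j\<in>UNIV. f (i,j))"
  by (simp add: sum.cartesian_product split_def)

lemma tensor_mult: "(A \<otimes>\<^sub>m B) ** (C \<otimes>\<^sub>m D) = (A ** C) \<otimes>\<^sub>m (B ** D)"
  by (simp add: vec_eq_iff tensor_def matrix_matrix_mult_def sum_pair sum_product mult_ac)

lemma madj_mult: "madj (A ** B) = madj B ** madj A"
  by (simp add: vec_eq_iff madj_def matrix_matrix_mult_def mult_ac)

lemma madj_tensor: "madj (A \<otimes>\<^sub>m B) = madj A \<otimes>\<^sub>m madj B"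
  by (simp add: vec_eq_iff madj_def tensor_def)

lemma madj_madj: "madj (madj A) = A"
  by (simp add: vec_eq_iff madj_def)




lemma ifz: "(a::complex) * (if P then 1 else 0) = (if P then a else 0)"
  "(if P then 1 else 0) * (a::complex) = (if P then a else 0)"
  "(if P then a else 0) * (b::complex) = (if P then a * b else 0)"
  "(b::complex) * (if P then a else 0) = (if P then b * a else 0)"
  by auto

lemma delta_sum1: fixes f :: "'a::finite \<Rightarrow> 'b::finite \<Rightarrow> complex" shows "(\<Sum>ja\<in>UNIV. \<Sum>ib\<in>UNIV. if j = ja then f ib ja else 0) = (\<Sum>ib\<in>UNIV. f ib j)"
  by (subst sum.swap) (simp add: sum.delta)
lemma delta_sum2: fixes f :: "'a::finite \<Rightarrow> 'b::finite \<Rightarrow> complex" shows "(\<Sum>ja\<in>UNIV. \<Sum>ib\<in>UNIV. if ja = j then f ib ja else 0) = (\<Sum>ib\<in>UNIV. f ib j)"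
  by (subst sum.swap) (simp add: sum.delta')

lemma ptE_left: "ptrace_E ((A \<otimes>\<^sub>m mat 1) ** M) = A ** ptrace_E M"
  apply (simp add: vec_eq_iff tensor_def matrix_matrix_mult_def ptrace_E_def sum_pair mat_def sum_distrib_left ifz delta_sum1 delta_sum2)
  apply (intro allI) apply (subst sum.swap) apply (rule refl)
  done

lemma ptE_right: "ptrace_E (M ** (C \<otimes>\<^sub>m mat 1)) = ptrace_E M ** C"
  apply (simp add: vec_eq_iff tensor_def matrix_matrix_mult_def ptrace_E_def sum_pair mat_def sum_distrib_right ifz delta_sum1 delta_sum2)
  apply (intro allI) apply (subst sum.swap) apply (rule refl)
  done

lemma tensor_one: "mat 1 \<otimes>\<^sub>m mat 1 = mat 1"
  by (auto simp add: vec_eq_iff tensor_def mat_def prod_eq_iff)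

lemma ptE_cyc: "ptrace_E ((mat 1 \<otimes>\<^sub>m B) ** N) = ptrace_E (N ** (mat 1 \<otimes>\<^sub>m B))"
  apply (simp add: vec_eq_iff tensor_def matrix_matrix_mult_def ptrace_E_def sum_pair mat_def ifz delta_sum1 delta_sum2)
  apply (intro allI) apply (subst sum.swap) apply (simp add: mult_ac)
  done

lemma ptE_mid: assumes "D ** B = mat 1"
  shows "ptrace_E ((mat 1 \<otimes>\<^sub>m B) ** M ** (mat 1 \<otimes>\<^sub>m D)) = ptrace_E M"
proof -
  have "ptrace_E ((mat 1 \<otimes>\<^sub>m B) ** M ** (mat 1 \<otimes>\<^sub>m D)) = ptrace_E ((mat 1 \<otimes>\<^sub>m B) ** (M ** (mat 1 \<otimes>\<^sub>m D)))"
    by (simp add: matrix_mul_assoc)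
  also have "\<dots> = ptrace_E (M ** ((mat 1 \<otimes>\<^sub>m D) ** (mat 1 \<otimes>\<^sub>m B)))"
    using ptE_cyc[of B "M ** (mat 1 \<otimes>\<^sub>m D)"] by (simp add: matrix_mul_assoc)
  also have "\<dots> = ptrace_E M" by (simp add: tensor_mult assms tensor_one)
  finally show ?thesis .
qed

lemma ptE_local: assumes "D ** B = mat 1"
  shows "ptrace_E ((A \<otimes>\<^sub>m B) ** M ** (C \<otimes>\<^sub>m D)) = A ** ptrace_E M ** C"
proof -
  define N where "N = (mat 1 \<otimes>\<^sub>m B) ** M ** (mat 1 \<otimes>\<^sub>m D)"
  have AB: "A \<otimes>\<^sub>m B = (A \<otimes>\<^sub>m mat 1) ** (mat 1 \<otimes>\<^sub>m B)" by (simp add: tensor_mult)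
  have CD: "C \<otimes>\<^sub>m D = (mat 1 \<otimes>\<^sub>m D) ** (C \<otimes>\<^sub>m mat 1)" by (simp add: tensor_mult)
  have "(A \<otimes>\<^sub>m B) ** M ** (C \<otimes>\<^sub>m D) = (A \<otimes>\<^sub>m mat 1) ** N ** (C \<otimes>\<^sub>m mat 1)"
    by (simp add: AB CD N_def matrix_mul_assoc)
  then have "ptrace_E ((A \<otimes>\<^sub>m B) ** M ** (C \<otimes>\<^sub>m D)) = A ** ptrace_E N ** C"
    by (simp add: ptE_left ptE_right)
  then show ?thesis using ptE_mid[OF assms, of M] by (simp add: N_def)
qed




definition sw :: "complex^('a::finite\<times>'a)^('a\<times>'a)" where
  "sw = (\<chi> p q. if q = (snd p, fst p) then 1 else 0)"

definition ptrace_S :: "complex^('a::finite\<times>'b::finite)^('a\<times>'b) \<Rightarrow> complex^'b^'b" where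
  "ptrace_S M = (\<chi> j l. \<Sum>i\<in>UNIV. M $ (i, j) $ (i, l))"

lemma sw_left: "(sw ** M) $ p $ q = M $ (snd p, fst p) $ q"
  by (simp add: sw_def matrix_matrix_mult_def ifz sum.delta sum.delta')

lemma sw_right: "(M ** sw) $ p $ q = M $ p $ (snd q, fst q)"
proof -
  have "(M ** sw) $ p $ q = (\<Sum>k\<in>UNIV. if k = (snd q, fst q) then M $ p $ k else 0)"
  proof -
    have e: "\<And>k. (q = (snd k, fst k)) = (k = (snd q, fst q))" by auto
    show ?thesis by (simp add: sw_def matrix_matrix_mult_def ifz e)
  qed
  then show ?thesis by (simp add: sum.delta)
qed

lemma sw_sw: "(sw::complex^('a::finite\<times>'a)^('a\<times>'a)) ** sw = mat 1"
  by (simp add: vec_eq_iff sw_left) (auto simp: sw_def mat_def prod_eq_iff)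

lemma madj_sw: "madj sw = sw"
  by (auto simp add: vec_eq_iff madj_def sw_def prod_eq_iff)

lemma sw_tensor: "sw ** (A \<otimes>\<^sub>m B) = (B \<otimes>\<^sub>m A) ** sw"
  by (simp add: vec_eq_iff sw_left sw_right tensor_def)

lemma ptS_eq: "ptrace_S M = ptrace_E (sw ** M ** sw)"
  by (simp add: vec_eq_iff ptrace_S_def ptrace_E_def sw_left sw_right)

lemma ptS_local: fixes A B C D :: "complex^'a::finite^'a" assumes "C ** A = mat 1"
  shows "ptrace_S ((A \<otimes>\<^sub>m B) ** M ** (C \<otimes>\<^sub>m D)) = B ** ptrace_S M ** D"
proof -
  have "sw ** ((A \<otimes>\<^sub>m B) ** M ** (C \<otimes>\<^sub>m D)) ** sw = (B \<otimes>\<^sub>m A) ** (sw ** M ** sw) ** (D \<otimes>\<^sub>m C)"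
    by (simp add: matrix_mul_assoc sw_tensor) (simp add: matrix_mul_assoc[symmetric] sw_tensor)
  then show ?thesis by (simp add: ptS_eq ptE_local assms)
qed




definition bm :: "complex \<Rightarrow> complex \<Rightarrow> complex \<Rightarrow> complex \<Rightarrow> complex^(2\<times>2)^(2\<times>2)" where
  "bm x y z w = (\<chi> p q. if p = q then (if fst p = snd p then x else z)
     else if fst p \<noteq> fst q \<and> snd p \<noteq> snd q then (if fst p = snd p then y else w) else 0)"

lemma sum22: "(\<Sum>p\<in>(UNIV::(2\<times>2) set). f p) = f (0,0) + f (0,1) + f (1,0) + f (1,1)"
  by (simp add: sum_pair sum2 add.assoc)

lemma all22: "(\<forall>p::2\<times>2. P p) = (P (0,0) \<and> P (0,1) \<and> P (1,0) \<and> P (1,1))"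
  apply (rule iffI)
   apply simp
  apply clarify
  subgoal for a b using two_cases[of a] two_cases[of b] by auto
  done

lemma bm_mult: "bm x y z w ** bm x' y' z' w' = bm (x*x'+y*y') (x*y'+y*x') (z*z'+w*w') (z*w'+w*z')"
  unfolding vec_eq_iff all22 by (simp add: bm_def matrix_matrix_mult_def sum22 algebra_simps)

lemma bm_one: "mat 1 = bm 1 0 1 0"
  unfolding vec_eq_iff all22 by (simp add: bm_def mat_def)

lemma mpow_bm: "mpow (bm x y z w) n = bm (((x+y)^n+(x-y)^n)/2) (((x+y)^n-(x-y)^n)/2)
   (((z+w)^n+(z-w)^n)/2) (((z+w)^n-(z-w)^n)/2)"
proof (induction n)
  case 0 then show ?case by (simp add: bm_one)
next
  case (Suc n) then show ?case by (simp add: bm_mult) (simp add: algebra_simps add_divide_distrib diff_divide_distrib)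
qed

lemma ham: "msmult (- \<i>)
     (msmult (of_real a1) (pauli1 \<otimes>\<^sub>m pauli1) + msmult (of_real a2) (pauli2 \<otimes>\<^sub>m pauli2)
      + msmult (of_real a3) (pauli3 \<otimes>\<^sub>m pauli3))
  = bm (-\<i>*a3) (-\<i>*(a1-a2)) (\<i>*a3) (-\<i>*(a1+a2))"
  unfolding vec_eq_iff all22 by (simp add: bm_def msmult_def tensor_def pauli1_def pauli2_def pauli3_def algebra_simps)




lemma exp_sums_c: "(\<lambda>n. (x::complex)^n / fact n) sums exp x"
  using exp_converges[of x] by (simp add: scaleR_conv_of_real divide_inverse mult.commute)

lemma ser_p: "(\<Sum>n. ((a::complex)^n + b^n) / (2 * fact n)) = (exp a + exp b)/2"
proof -
  have "(\<lambda>n. (a^n / fact n + b^n / fact n) / 2) sums ((exp a + exp b)/2)"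
    by (intro sums_divide sums_add exp_sums_c)
  moreover have "(\<lambda>n. (a^n / fact n + b^n / fact n) / 2) = (\<lambda>n. ((a::complex)^n + b^n) / (2 * fact n))"
    by (simp add: fun_eq_iff add_divide_distrib mult.commute)
  ultimately show ?thesis by (simp add: sums_iff)
qed

lemma ser_m: "(\<Sum>n. ((a::complex)^n - b^n) / (2 * fact n)) = (exp a - exp b)/2"
proof -
  have "(\<lambda>n. (a^n / fact n - b^n / fact n) / 2) sums ((exp a - exp b)/2)"
    by (intro sums_divide sums_diff exp_sums_c)
  moreover have "(\<lambda>n. (a^n / fact n - b^n / fact n) / 2) = (\<lambda>n. ((a::complex)^n - b^n) / (2 * fact n))"
    by (simp add: fun_eq_iff diff_divide_distrib mult.commute)
  ultimately show ?thesis by (simp add: sums_iff)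
qed

lemma mexp_bm: "mexp (bm x y z w) = bm ((exp(x+y)+exp(x-y))/2) ((exp(x+y)-exp(x-y))/2)
   ((exp(z+w)+exp(z-w))/2) ((exp(z+w)-exp(z-w))/2)"
  unfolding vec_eq_iff all22 mexp_def mpow_bm
  by (simp add: bm_def ser_p ser_m)




lemma mult_msmult: "A ** msmult c B = msmult c (A ** B)"
  by (simp add: vec_eq_iff msmult_def matrix_matrix_mult_def sum_distrib_left mult_ac)
lemma msmult_mult: "msmult c A ** B = msmult c (A ** B)"
  by (simp add: vec_eq_iff msmult_def matrix_matrix_mult_def sum_distrib_left mult_ac)
lemma madj_msmult: "madj (msmult c A) = msmult (cnj c) (madj A)"
  by (simp add: vec_eq_iff msmult_def madj_def)
lemma msmult_msmult: "msmult c (msmult d A) = msmult (c * d) A"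
  by (simp add: vec_eq_iff msmult_def mult_ac)
lemma msmult_1: "msmult 1 A = A"
  by (simp add: vec_eq_iff msmult_def)

lemma phase: assumes "c * cnj c = 1"
  shows "msmult c V ** M ** madj (msmult c V) = V ** M ** madj V"
  by (simp add: mult_msmult msmult_mult madj_msmult msmult_msmult mult.commute[of "cnj c"] assms msmult_1)

lemma local_case: assumes "munitary Y"
  shows "ptrace_E ((X \<otimes>\<^sub>m Y) ** M ** madj (X \<otimes>\<^sub>m Y)) = X ** ptrace_E M ** madj X"
  using assms by (simp add: madj_tensor ptE_local munitary_def)

lemma swap_case: fixes X Y :: "complex^'a::finite^'a" assumes "munitary X"
  shows "ptrace_E ((sw ** (X \<otimes>\<^sub>m Y)) ** M ** madj (sw ** (X \<otimes>\<^sub>m Y))) = Y ** ptrace_S M ** madj Y"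
proof -
  have "(sw ** (X \<otimes>\<^sub>m Y)) ** M ** madj (sw ** (X \<otimes>\<^sub>m Y)) = sw ** ((X \<otimes>\<^sub>m Y) ** M ** madj (X \<otimes>\<^sub>m Y)) ** sw"
    by (simp add: madj_mult madj_sw matrix_mul_assoc)
  then show ?thesis using assms
    by (simp add: ptS_eq[symmetric] madj_tensor ptS_local munitary_def)
qed

lemma munitary_mult: "munitary A \<Longrightarrow> munitary B \<Longrightarrow> munitary (A ** B)"
  unfolding munitary_def madj_mult
  by (metis matrix_mul_assoc matrix_mul_lid matrix_mul_rid)

lemma ptE_tensor: "ptrace_E (A \<otimes>\<^sub>m B) = msmult (mtrace B) A"
  by (simp add: vec_eq_iff ptrace_E_def tensor_def msmult_def mtrace_def sum_distrib_left mult_ac)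

lemma ptS_tensor: "ptrace_S (A \<otimes>\<^sub>m B) = msmult (mtrace A) B"
  by (simp add: vec_eq_iff ptrace_S_def tensor_def msmult_def mtrace_def sum_distrib_left mult_ac)

lemma tr_ptE: "mtrace (ptrace_E M) = mtrace M"
  by (simp add: mtrace_def ptrace_E_def sum_pair)

lemma tr_ptS: "mtrace (ptrace_S M) = mtrace M"
  by (simp add: mtrace_def ptrace_S_def sum_pair) (rule sum.swap)




definition mk :: "complex \<Rightarrow> complex \<Rightarrow> complex \<Rightarrow> complex \<Rightarrow> complex^2^2" where
  "mk a b c d = (\<chi> i j. if i = 0 then (if j = 0 then a else b) else (if j = 0 then c else d))"

lemma all2: "(\<forall>i::2. P i) = (P 0 \<and> P 1)"
  by (metis two_cases)

lemma mk_unitary: "munitary (mk a b c d) \<longleftrightarrow>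
   (a*cnj a + b*cnj b = 1 \<and> a*cnj c + b*cnj d = 0 \<and> c*cnj a + d*cnj b = 0 \<and> c*cnj c + d*cnj d = 1 \<and>
    cnj a*a + cnj c*c = 1 \<and> cnj a*b + cnj c*d = 0 \<and> cnj b*a + cnj d*c = 0 \<and> cnj b*b + cnj d*d = 1)"
  unfolding munitary_def vec_eq_iff all2
  by (simp add: madj_def mk_def matrix_matrix_mult_def sum2 mat_def)

lemma bm_local:
  assumes "s = 1 \<or> s = -1" "t = 1 \<or> t = -1"
  shows "\<exists>P. munitary P \<and> bm ((1+s)/2) ((1-s)/2) ((t+s*t)/2) ((t-s*t)/2) = P \<otimes>\<^sub>m P"
  using assms
proof (elim disjE)
  assume st: "s = 1" "t = 1"
  have "bm ((1+s)/2) ((1-s)/2) ((t+s*t)/2) ((t-s*t)/2) = mk 1 0 0 1 \<otimes>\<^sub>m mk 1 0 0 1"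
    unfolding vec_eq_iff all22 st by (simp add: bm_def tensor_def mk_def)
  moreover have "munitary (mk 1 0 0 1)" by (simp add: mk_unitary)
  ultimately show ?thesis by blast
next
  assume st: "s = 1" "t = -1"
  have "bm ((1+s)/2) ((1-s)/2) ((t+s*t)/2) ((t-s*t)/2) = mk 1 0 0 (-1) \<otimes>\<^sub>m mk 1 0 0 (-1)"
    unfolding vec_eq_iff all22 st by (simp add: bm_def tensor_def mk_def)
  moreover have "munitary (mk 1 0 0 (-1))" by (simp add: mk_unitary)
  ultimately show ?thesis by blast
next
  assume st: "s = -1" "t = 1"
  have "bm ((1+s)/2) ((1-s)/2) ((t+s*t)/2) ((t-s*t)/2) = mk 0 1 1 0 \<otimes>\<^sub>m mk 0 1 1 0"
    unfolding vec_eq_iff all22 st by (simp add: bm_def tensor_def mk_def)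
  moreover have "munitary (mk 0 1 1 0)" by (simp add: mk_unitary)
  ultimately show ?thesis by blast
next
  assume st: "s = -1" "t = -1"
  have "bm ((1+s)/2) ((1-s)/2) ((t+s*t)/2) ((t-s*t)/2) = mk 0 1 (-1) 0 \<otimes>\<^sub>m mk 0 1 (-1) 0"
    unfolding vec_eq_iff all22 st by (simp add: bm_def tensor_def mk_def)
  moreover have "munitary (mk 0 1 (-1) 0)" by (simp add: mk_unitary)
  ultimately show ?thesis by blast
qed

lemma sw_bm: "sw ** bm x y z w = bm x y w z"
  unfolding vec_eq_iff all22 by (simp add: sw_left bm_def)

lemma bm_swap:
  assumes "s = 1 \<or> s = -1" "t = 1 \<or> t = -1"
  shows "\<exists>P. munitary P \<and> bm ((1+s)/2) ((1-s)/2) ((t-s*t)/2) ((t+s*t)/2) = sw ** (P \<otimes>\<^sub>m P)"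
proof -
  obtain P where P: "munitary P" "bm ((1+s)/2) ((1-s)/2) ((t+s*t)/2) ((t-s*t)/2) = P \<otimes>\<^sub>m P"
    using bm_local[OF assms] by blast
  have "sw ** (P \<otimes>\<^sub>m P) = bm ((1+s)/2) ((1-s)/2) ((t-s*t)/2) ((t+s*t)/2)"
    using P(2)[symmetric] by (simp add: sw_bm)
  then show ?thesis using P(1) by metis
qed




lemma eps_cases:
  fixes c1 c2 c3 :: real
  assumes h: "(3 - c1*(c2+c3) - c2*c3)/4 = 0" and b: "\<bar>c1\<bar> \<le> 1" "\<bar>c2\<bar> \<le> 1" "\<bar>c3\<bar> \<le> 1"
  shows "(c1 = 1 \<and> c2 = 1 \<and> c3 = 1) \<or> (c1 = -1 \<and> c2 = -1 \<and> c3 = -1)"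
proof -
  have p: "x * y \<le> 1" if "\<bar>x\<bar> \<le> 1" "\<bar>y\<bar> \<le> 1" for x y :: real
  proof -
    have "\<bar>x\<bar> * \<bar>y\<bar> \<le> 1" using that by (simp add: mult_le_one)
    then show ?thesis by (metis abs_ge_self abs_mult order_trans)
  qed
  have 12: "c1*c2 \<le> 1" and 13: "c1*c3 \<le> 1" and 23: "c2*c3 \<le> 1" using p b by auto
  have s: "c1*c2 + c1*c3 + c2*c3 = 3" using h by (simp add: algebra_simps)
  have e12: "c1*c2 = 1" and e13: "c1*c3 = 1" and e23: "c2*c3 = 1" using 12 13 23 s by linarith+
  have c1nz: "c1 \<noteq> 0" using e12 by auto
  have "c2 = c3" using e12 e13 c1nz by (metis mult_left_cancel)
  then have "c2^2 = 1" using e23 by (simp add: power2_eq_square)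
  then have "c2 = 1 \<or> c2 = -1" by (simp add: power2_eq_1_iff)
  moreover have "c1 = c2" using e12 \<open>c2 = c3\<close> e23 by (metis mult.commute mult_right_cancel c1nz mult_zero_left zero_neq_one)
  ultimately show ?thesis using \<open>c2 = c3\<close> by auto
qed

lemma exp4: assumes "cos x = eps" "eps = 1 \<or> eps = -1"
  shows "exp (\<i> * complex_of_real x) = complex_of_real eps"
proof -
  have "sin x ^ 2 = 0" using sin_cos_squared_add[of x] assms by auto
  then have "sin x = 0" by simp
  then show ?thesis using assms by (simp add: complex_eq_iff Re_exp Im_exp)
qed

lemma expc: "A + B = C \<Longrightarrow> exp A * exp B = exp (C::complex)"
  by (simp add: mult_exp_exp)

lemma bm_scale: "msmult c (bm p q u v) = bm (c * p) (c * q) (c * u) (c * v)"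
  unfolding vec_eq_iff all22 by (simp add: bm_def msmult_def)




lemma sq1: "(s::complex) * s = 1 \<Longrightarrow> s = 1 \<or> s = -1"
  using power2_eq_1_iff[of s] by (simp add: power2_eq_square)

lemma omega_form:
  assumes hyp: "(3 - cos (4*a1) * (cos (4*a2) + cos (4*a3)) - cos (4*a2) * cos (4*a3)) / 4 = 0"
  shows "\<exists>c P. c * cnj c = 1 \<and> munitary P \<and>
    (Omega a1 a2 a3 = msmult c (P \<otimes>\<^sub>m P) \<or> Omega a1 a2 a3 = msmult c (sw ** (P \<otimes>\<^sub>m P)))"
proof -
  obtain eps :: real where eps: "eps = 1 \<or> eps = -1" "cos (4*a1) = eps" "cos (4*a2) = eps" "cos (4*a3) = eps"
    using eps_cases[OF hyp] by (metis abs_cos_le_one)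
  have u1: "exp (\<i> * complex_of_real (4*a1)) = complex_of_real eps" using exp4 eps by blast
  have u2: "exp (\<i> * complex_of_real (4*a2)) = complex_of_real eps" using exp4 eps by blast
  have u3: "exp (\<i> * complex_of_real (4*a3)) = complex_of_real eps" using exp4 eps by blast
  have en: "complex_of_real eps * inverse (complex_of_real eps) = 1" using eps(1) by auto
  have ee: "complex_of_real eps * complex_of_real eps = 1" using eps(1) by auto
  define x where "x = - \<i> * complex_of_real a3"
  define y where "y = - \<i> * (complex_of_real a1 - complex_of_real a2)"
  define z where "z = \<i> * complex_of_real a3"
  define w where "w = - \<i> * (complex_of_real a1 + complex_of_real a2)"
  have Om: "Omega a1 a2 a3 = bm ((exp(x+y)+exp(x-y))/2) ((exp(x+y)-exp(x-y))/2)
   ((exp(z+w)+exp(z-w))/2) ((exp(z+w)-exp(z-w))/2)"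
    unfolding Omega_def ham mexp_bm x_def y_def z_def w_def by simp
  define E where "E = exp (x+y)"
  define s where "s = exp (-2*y)"
  define t where "t = exp (z+w-(x+y))"
  define r where "r = exp (z-w-(x+y))"
  have Es: "exp (x-y) = E * s" unfolding E_def s_def by (rule expc[symmetric]) simp
  have Et: "exp (z+w) = E * t" unfolding E_def t_def by (rule expc[symmetric]) simp
  have Er: "exp (z-w) = E * r" unfolding E_def r_def by (rule expc[symmetric]) simp
  have "s * s = exp (\<i> * complex_of_real (4*a1)) * exp (- (\<i> * complex_of_real (4*a2)))"
    unfolding s_def mult_exp_exp by (rule arg_cong[where f=exp]) (simp add: y_def algebra_simps)
  then have ss: "s * s = 1" by (simp only: u1 u2 exp_minus en)
  have "t * t = exp (\<i> * complex_of_real (4*a3)) * exp (- (\<i> * complex_of_real (4*a2)))"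
    unfolding t_def mult_exp_exp by (rule arg_cong[where f=exp]) (simp add: x_def y_def z_def w_def algebra_simps)
  then have tt: "t * t = 1" by (simp only: u3 u2 exp_minus en)
  have "r = s * t * exp (\<i> * complex_of_real (4*a2))"
    unfolding r_def s_def t_def mult_exp_exp by (rule arg_cong[where f=exp]) (simp add: x_def y_def z_def w_def algebra_simps)
  then have rst: "r = s * t * complex_of_real eps" by (simp only: u2)
  have xy: "x + y = \<i> * complex_of_real (a2 - a1 - a3)" by (simp add: x_def y_def algebra_simps)
  have EE: "E * cnj E = 1"
    using complex_norm_square[of E] unfolding E_def xy by simp
  have Om2: "Omega a1 a2 a3 = msmult E (bm ((1+s)/2) ((1-s)/2) ((t+r)/2) ((t-r)/2))"
    unfolding Om bm_scale Es Et Er E_def[symmetric] by (simp add: algebra_simps add_divide_distrib diff_divide_distrib)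
  have s01: "s = 1 \<or> s = -1" using sq1 ss by blast
  have t01: "t = 1 \<or> t = -1" using sq1 tt by blast
  show ?thesis
    using eps(1)
  proof
    assume "eps = 1"
    then have "r = s * t" using rst by simp
    then obtain P where "munitary P" "bm ((1+s)/2) ((1-s)/2) ((t+r)/2) ((t-r)/2) = P \<otimes>\<^sub>m P"
      using bm_local[OF s01 t01] by auto
    then show ?thesis using Om2 EE by metis
  next
    assume "eps = -1"
    then have "r = - (s * t)" using rst by simp
    then obtain P where "munitary P" "bm ((1+s)/2) ((1-s)/2) ((t+r)/2) ((t-r)/2) = sw ** (P \<otimes>\<^sub>m P)"
      using bm_swap[OF s01 t01] by auto
    then show ?thesis using Om2 EE by metis
  qed
qed




lemma herm_ptS: assumes "madj M = M" shows "madj (ptrace_S M) = ptrace_S M"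
proof -
  have h: "cnj (M $ q $ p) = M $ p $ q" for p q
    using arg_cong[OF assms, of "\<lambda>A. A $ p $ q"] by (simp add: madj_def)
  show ?thesis by (simp add: vec_eq_iff madj_def ptrace_S_def h)
qed

lemma cnj_if0: "cnj (if P then a else 0) = (if P then cnj a else 0)" by simp
lemma sum_if_const: "(\<Sum>x\<in>A. if P then f x else 0) = (if P then (\<Sum>x\<in>A. f x) else (0::complex))"
  by (cases P) auto

lemma sum_fst: fixes g :: "'a::finite\<times>'b::finite \<Rightarrow> complex"
  shows "(\<Sum>p\<in>UNIV. if fst p = i then g p else 0) = (\<Sum>j\<in>UNIV. g (i,j))"
proof -
  have "(\<Sum>p\<in>UNIV. if fst p = i then g p else 0) = (\<Sum>a\<in>UNIV. \<Sum>j\<in>UNIV. if a = i then g (a,j) else 0)"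
    by (subst sum_pair) simp
  also have "\<dots> = (\<Sum>a\<in>UNIV. if a = i then (\<Sum>j\<in>UNIV. g (a,j)) else 0)"
    by (simp only: sum_if_const)
  also have "\<dots> = (\<Sum>j\<in>UNIV. g (i,j))" by (simp add: sum.delta')
  finally show ?thesis .
qed

lemma quad_one: fixes M :: "complex^('a::finite\<times>'b::finite)^('a\<times>'b)" and v :: "complex^'b"
  shows "(\<Sum>p\<in>UNIV. \<Sum>q\<in>UNIV. cnj ((\<chi> p. if fst p = i then v $ snd p else 0) $ p) * M $ p $ q
        * (\<chi> p. if fst p = i then v $ snd p else 0) $ q)
      = (\<Sum>j\<in>UNIV. \<Sum>l\<in>UNIV. cnj (v $ j) * M $ (i,j) $ (i,l) * v $ l)"
proof -
  have pw: "cnj ((\<chi> p. if fst p = i then v $ snd p else 0) $ p) * M $ p $ q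
        * (\<chi> p. if fst p = i then v $ snd p else 0) $ q
     = (if fst p = i then (if fst q = i then cnj (v $ snd p) * M $ p $ q * v $ snd q else 0) else 0)" for p q
    by simp
  have "(\<Sum>p\<in>UNIV. \<Sum>q\<in>UNIV. cnj ((\<chi> p. if fst p = i then v $ snd p else 0) $ p) * M $ p $ q
        * (\<chi> p. if fst p = i then v $ snd p else 0) $ q)
     = (\<Sum>p\<in>UNIV. if fst p = i then (\<Sum>q\<in>UNIV. if fst q = i then cnj (v $ snd p) * M $ p $ q * v $ snd q else 0) else 0)"
    by (simp only: pw sum_if_const)
  also have "\<dots> = (\<Sum>j\<in>UNIV. \<Sum>l\<in>UNIV. cnj (v $ j) * M $ (i,j) $ (i,l) * v $ l)"
    by (simp only: sum_fst fst_conv snd_conv)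
  finally show ?thesis .
qed

lemma quad_ptS: fixes M :: "complex^('a::finite\<times>'b::finite)^('a\<times>'b)" and v :: "complex^'b"
  shows "(\<Sum>j\<in>UNIV. \<Sum>l\<in>UNIV. cnj (v $ j) * ptrace_S M $ j $ l * v $ l)
   = (\<Sum>i\<in>UNIV. (\<Sum>p\<in>UNIV. \<Sum>q\<in>UNIV. cnj ((\<chi> p. if fst p = i then v $ snd p else 0) $ p) * M $ p $ q
        * (\<chi> p. if fst p = i then v $ snd p else 0) $ q))"
proof -
  have "(\<Sum>i\<in>UNIV. (\<Sum>p\<in>UNIV. \<Sum>q\<in>UNIV. cnj ((\<chi> p. if fst p = i then v $ snd p else 0) $ p) * M $ p $ q
        * (\<chi> p. if fst p = i then v $ snd p else 0) $ q))
      = (\<Sum>i\<in>UNIV. \<Sum>j\<in>UNIV. \<Sum>l\<in>UNIV. cnj (v $ j) * M $ (i,j) $ (i,l) * v $ l)"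
    by (simp only: quad_one)
  also have "\<dots> = (\<Sum>j\<in>UNIV. \<Sum>i\<in>UNIV. \<Sum>l\<in>UNIV. cnj (v $ j) * M $ (i,j) $ (i,l) * v $ l)"
    by (rule sum.swap)
  also have "\<dots> = (\<Sum>j\<in>UNIV. \<Sum>l\<in>UNIV. \<Sum>i\<in>UNIV. cnj (v $ j) * M $ (i,j) $ (i,l) * v $ l)"
    by (rule sum.cong[OF refl], rule sum.swap)
  also have "\<dots> = (\<Sum>j\<in>UNIV. \<Sum>l\<in>UNIV. cnj (v $ j) * ptrace_S M $ j $ l * v $ l)"
    by (simp add: ptrace_S_def sum_distrib_left sum_distrib_right)
  finally show ?thesis by simp
qed

lemma density_ptS: assumes "density M" shows "density (ptrace_S M)"
proof -
  have M: "madj M = M" "\<And>v. 0 \<le> Re (\<Sum>i\<in>UNIV. \<Sum>j\<in>UNIV. cnj (v $ i) * M $ i $ j * v $ j)" "mtrace M = 1"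
    using assms by (auto simp: density_def mpsd_def)
  have "0 \<le> Re (\<Sum>j\<in>UNIV. \<Sum>l\<in>UNIV. cnj (v $ j) * ptrace_S M $ j $ l * v $ l)" for v
    unfolding quad_ptS by (subst Re_sum) (rule sum_nonneg, rule M(2))
  then show ?thesis using M by (simp add: density_def mpsd_def herm_ptS tr_ptS)
qed




lemma tensor_sw: "(A \<otimes>\<^sub>m B) ** sw = sw ** (B \<otimes>\<^sub>m A)"
  by (simp add: sw_tensor)

theorem theorem3:
  fixes L1 L2 R1 R2 :: "complex^2^2" and a1 a2 a3 :: real
    and \<rho> :: "complex^(2\<times>2)^(2\<times>2)"
  assumes "munitary L1" "munitary L2" "munitary R1" "munitary R2"
    and "(3 - cos (4*a1) * (cos (4*a2) + cos (4*a3)) - cos (4*a2) * cos (4*a3)) / 4 = 0"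
    and "density \<rho>"
  shows "let U = (L1 \<otimes>\<^sub>m L2) ** Omega a1 a2 a3 ** (R1 \<otimes>\<^sub>m R2) in
         \<exists>\<zeta> :: complex^2^2. density \<zeta> \<and>
           ptrace_E (U ** \<rho> ** madj U) = ptrace_E (U ** (ptrace_E \<rho> \<otimes>\<^sub>m \<zeta>) ** madj U)"
proof -
  obtain c P where cP: "c * cnj c = 1" "munitary P"
    and Om: "Omega a1 a2 a3 = msmult c (P \<otimes>\<^sub>m P) \<or> Omega a1 a2 a3 = msmult c (sw ** (P \<otimes>\<^sub>m P))"
    using omega_form[OF assms(5)] by blast
  define U where "U = (L1 \<otimes>\<^sub>m L2) ** Omega a1 a2 a3 ** (R1 \<otimes>\<^sub>m R2)"
  define \<zeta> where "\<zeta> = ptrace_S \<rho>"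
  have dz: "density \<zeta>" unfolding \<zeta>_def using assms(6) by (rule density_ptS)
  have tr: "mtrace \<rho> = 1" using assms(6) by (simp add: density_def)
  define M2 where "M2 = ptrace_E \<rho> \<otimes>\<^sub>m \<zeta>"
  have e1: "ptrace_E M2 = ptrace_E \<rho>"
    unfolding M2_def ptE_tensor \<zeta>_def tr_ptS tr msmult_1 ..
  have e2: "ptrace_S M2 = ptrace_S \<rho>"
    unfolding M2_def ptS_tensor \<zeta>_def tr_ptE tr msmult_1 ..
  have main: "ptrace_E (U ** \<rho> ** madj U) = ptrace_E (U ** M2 ** madj U)"
    using Om
  proof
    assume h: "Omega a1 a2 a3 = msmult c (P \<otimes>\<^sub>m P)"
    define X where "X = L1 ** P ** R1"
    define Y where "Y = L2 ** P ** R2"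
    have UX: "U = msmult c (X \<otimes>\<^sub>m Y)"
      unfolding U_def h X_def Y_def by (simp add: mult_msmult msmult_mult tensor_mult)
    have Yu: "munitary Y" unfolding Y_def using assms(2,4) cP(2) by (simp add: munitary_mult)
    have "ptrace_E (U ** M ** madj U) = X ** ptrace_E M ** madj X" for M
      unfolding UX phase[OF cP(1)] local_case[OF Yu] ..
    then show ?thesis using e1 by simp
  next
    assume h: "Omega a1 a2 a3 = msmult c (sw ** (P \<otimes>\<^sub>m P))"
    define X where "X = L2 ** P ** R1"
    define Y where "Y = L1 ** P ** R2"
    have "U = msmult c ((L1 \<otimes>\<^sub>m L2) ** sw ** (P \<otimes>\<^sub>m P) ** (R1 \<otimes>\<^sub>m R2))"
      unfolding U_def h by (simp add: mult_msmult msmult_mult matrix_mul_assoc)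
    also have "\<dots> = msmult c (sw ** (((L2 \<otimes>\<^sub>m L1) ** (P \<otimes>\<^sub>m P)) ** (R1 \<otimes>\<^sub>m R2)))"
      by (simp add: tensor_sw matrix_mul_assoc)
    also have "\<dots> = msmult c (sw ** (X \<otimes>\<^sub>m Y))"
      unfolding X_def Y_def by (simp add: tensor_mult)
    finally have UX: "U = msmult c (sw ** (X \<otimes>\<^sub>m Y))" .
    have Xu: "munitary X" unfolding X_def using assms(2,3) cP(2) by (simp add: munitary_mult)
    have "ptrace_E (U ** M ** madj U) = Y ** ptrace_S M ** madj Y" for M
      unfolding UX phase[OF cP(1)] swap_case[OF Xu] ..
    then show ?thesis using e2 by simp
  qed
  show ?thesis unfolding Let_def U_def[symmetric] using dz main unfolding M2_def by blast
qed


end
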